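(* Let $b\in\mathbb{Z}^+$ be odd. Then for all complex $q$ with $|q|<1$, $$\sum_{n=0}^{\infty}N(3,5,4b;8n+9)q^n=4q^{\frac{b-1}2}\varphi(q^6)\psi(q^5)\psi(q^{4b})+4q\varphi(q^{2b})\psi(q^5)\psi(q^{12}).$$
   Context: $\mathbb{Z}^+$ is the set of positive integers. For $a,b,c\in\mathbb{Z}^+$ and nonnegative integer $n$, $N(a,b,c;n)$ denotes the number of triples $(x,y,z)\in\mathbb{Z}^3$ with $n=ax^2+by^2+cz^2$. Ramanujan's theta functions are $\varphi(q)=\sum_{n=-\infty}^{\infty}q^{n^2}$ and $\psi(q)=\sum_{n=0}^{\infty}q^{n(n+1)/2}$ for $|q|<1$. *)

theory Defs
  imports "HOL-Analysis.Analysis"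
begin

definition N3 :: "nat \<Rightarrow> nat \<Rightarrow> nat \<Rightarrow> nat \<Rightarrow> nat" where
  "N3 a b c n = card {(x :: int, y :: int, z :: int).
      int n = int a * x^2 + int b * y^2 + int c * z^2}"

definition ram_phi :: "complex \<Rightarrow> complex" where
  "ram_phi q = (\<Sum>\<^sub>\<infinity> n :: int. q ^ nat (n^2))"

definition ram_psi :: "complex \<Rightarrow> complex" where
  "ram_psi q = (\<Sum>n. q ^ (n * (n + 1) div 2))"

end

theory Submission imports Defs begin

lemma nat_hs:
  fixes w :: complex and e :: "nat \<Rightarrow> nat"
  assumes "norm w < 1" "\<And>n. n \<le> e n"
  shows "((\<lambda>n. w ^ e n) has_sum (\<Sum>n. w ^ e n)) UNIV"
proof -
  have s: "summable (\<lambda>n. norm (w ^ e n))"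
  proof (rule summable_comparison_test[where g="\<lambda>n. norm w ^ n"])
    show "\<exists>N. \<forall>n\<ge>N. norm (norm (w ^ e n)) \<le> norm w ^ n"
      using assms by (auto simp: norm_power intro!: power_decreasing)
    show "summable (\<lambda>n. norm w ^ n)" using assms by (simp add: summable_geometric)
  qed
  then have "summable (\<lambda>n. w ^ e n)" by (rule summable_norm_cancel)
  with s show ?thesis by (intro norm_summable_imp_has_sum) (auto intro: summable_sums)
qed

lemma int_split:
  fixes f :: "int \<Rightarrow> complex"
  assumes "((\<lambda>n. f (int n)) has_sum a) UNIV" "((\<lambda>n. f (- int n - 1)) has_sum c) UNIV"
  shows "(f has_sum (a + c)) UNIV"
proof -
  have 1: "(f has_sum a) (range int)"
    using has_sum_reindex[of int UNIV f a] assms(1) by (simp add: o_def)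
  have 2: "(f has_sum c) (range (\<lambda>n. - int n - 1))"
    using has_sum_reindex[of "\<lambda>n. - int n - 1" UNIV f c] assms(2) by (simp add: o_def inj_on_def)
  have "(f has_sum (a + c)) (range int \<union> range (\<lambda>n. - int n - 1))"
    by (rule has_sum_Un_disjoint[OF 1 2]) auto
  moreover have "range int \<union> range (\<lambda>n. - int n - 1) = UNIV"
  proof -
    have "x \<in> range int \<union> range (\<lambda>n. - int n - 1)" for x :: int
    proof (cases "x \<ge> 0")
      case True
      then have "x = int (nat x)" by simp
      then show ?thesis by blast
    next
      case False
      then have "x = - int (nat (- x - 1)) - 1" by simp
      then show ?thesis by blast
    qed
    then show ?thesis by blast
  qed
  ultimately show ?thesis by simp
qed

lemma has_sum_prod2:
  fixes f :: "'a \<Rightarrow> complex" and g :: "'b \<Rightarrow> complex"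
  assumes f: "(f has_sum a) A" and g: "(g has_sum c) B"
  shows "((\<lambda>(x,y). f x * g y) has_sum (a * c)) (A \<times> B)"
proof (rule has_sum_SigmaI[where g="\<lambda>x. f x * c"])
  show "((\<lambda>y. (\<lambda>(x,y). f x * g y) (x, y)) has_sum f x * c) B" if "x \<in> A" for x
    using has_sum_cmult_right[OF g] by simp
  show "((\<lambda>x. f x * c) has_sum a * c) A" using has_sum_cmult_left[OF f] .
  have fa: "(\<lambda>x. norm (f x)) summable_on A" using f summable_on_iff_abs_summable_on_complex has_sum_imp_summable by metis
  have ga: "(\<lambda>x. norm (g x)) summable_on B" using g summable_on_iff_abs_summable_on_complex has_sum_imp_summable by metis
  have "(\<lambda>p. norm ((\<lambda>(x,y). f x * g y) p)) summable_on A \<times> B"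
  proof (rule iffD2[OF Infinite_Sum.abs_summable_on_Sigma_iff], intro conjI ballI)
    show "(\<lambda>y. norm ((\<lambda>(x,y). f x * g y) (x, y))) summable_on B" for x
      using summable_on_cmult_right[OF ga, of "norm (f x)"] by (simp add: norm_mult)
    have "(\<lambda>x. norm (f x) * (\<Sum>\<^sub>\<infinity>y\<in>B. norm (g y))) summable_on A"
      using summable_on_cmult_left[OF fa] by simp
    then have "(\<lambda>x. norm (norm (f x) * (\<Sum>\<^sub>\<infinity>y\<in>B. norm (g y)))) summable_on A"
      by (simp add: infsum_nonneg abs_mult)
    then show "(\<lambda>x. norm (\<Sum>\<^sub>\<infinity>y\<in>B. norm ((\<lambda>(x,y). f x * g y) (x, y)))) summable_on A"
      by (simp add: norm_mult infsum_cmult_right')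
  qed
  then show "(\<lambda>(x,y). f x * g y) summable_on A \<times> B"
    using summable_on_iff_abs_summable_on_complex by metis
qed


definition tri :: "int \<Rightarrow> int" where "tri s = s * (s + 1) div 2"

lemma tri2: "2 * tri s = s * (s + 1)"
  unfolding tri_def by simp

lemma tri_nonneg: "tri s \<ge> 0"
proof -
  have "s * (s + 1) \<ge> 0"
    by (cases "s \<ge> 0") (auto intro: mult_nonneg_nonneg mult_nonpos_nonpos)
  then show ?thesis using tri2[of s] by linarith
qed

lemma tri_neg: "tri (- int n - 1) = int (n * (n + 1) div 2)"
proof -
  have h: "2 * (n * (n + 1) div 2) = n * (n + 1)" by simp
  have h2: "2 * int (n * (n + 1) div 2) = int n * (int n + 1)"
  proof -
    have "int (2 * (n * (n + 1) div 2)) = int (n * (n + 1))" using h by (rule arg_cong)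
    then show ?thesis by (simp only: of_nat_mult of_nat_add of_nat_1 of_nat_numeral)
  qed
  have "2 * tri (- int n - 1) = 2 * int (n * (n + 1) div 2)"
    unfolding tri2 h2 by (simp add: algebra_simps)
  then show ?thesis by simp
qed

lemma tri_pos: "tri (int n) = int (n * (n + 1) div 2)"
proof -
  have h: "2 * (n * (n + 1) div 2) = n * (n + 1)" by simp
  have h2: "2 * int (n * (n + 1) div 2) = int n * (int n + 1)"
  proof -
    have "int (2 * (n * (n + 1) div 2)) = int (n * (n + 1))" using h by (rule arg_cong)
    then show ?thesis by (simp only: of_nat_mult of_nat_add of_nat_1 of_nat_numeral)
  qed
  have "2 * tri (int n) = 2 * int (n * (n + 1) div 2)"
    unfolding tri2 h2 by (simp add: algebra_simps)
  then show ?thesis by simp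
qed

lemma tri_ge: "(n::nat) \<le> n * (n + 1) div 2"
proof (cases n)
  case (Suc m)
  have "2 * n \<le> n * (n + 1)" using Suc by simp
  then show ?thesis by linarith
qed simp

lemma phi_hs:
  assumes "norm w < 1"
  shows "((\<lambda>n::int. w ^ nat (n^2)) has_sum ram_phi w) UNIV"
proof -
  have 1: "((\<lambda>n. w ^ (n^2)) has_sum (\<Sum>n. w ^ (n^2))) UNIV"
    by (rule nat_hs[OF assms]) (rule power2_nat_le_imp_le, simp)
  have 2: "((\<lambda>n. w ^ ((n+1)^2)) has_sum (\<Sum>n. w ^ ((n+1)^2))) UNIV"
    by (rule nat_hs[OF assms]) (rule power2_nat_le_imp_le, simp)
  have o1: "((\<lambda>n. w ^ nat ((int n)^2)) has_sum (\<Sum>n. w ^ (n^2))) UNIV"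
  proof -
    have "nat ((int n)^2) = n^2" for n by (metis nat_int of_nat_power)
    then show ?thesis using 1 by simp
  qed
  have e: "nat ((- int n - 1)^2) = (n+1)^2" for n
  proof -
    have "(- int n - 1)^2 = int ((n+1)^2)" by (simp add: power2_eq_square algebra_simps)
    then show ?thesis by (metis nat_int)
  qed
  have o2: "((\<lambda>n. w ^ nat ((- int n - 1)^2)) has_sum (\<Sum>n. w ^ ((n+1)^2))) UNIV"
    using 2 by (simp add: e)
  have "((\<lambda>n::int. w ^ nat (n^2)) summable_on UNIV)"
    using int_split[OF o1 o2] has_sum_imp_summable by blast
  then show ?thesis unfolding ram_phi_def by (rule has_sum_infsum)
qed

lemma psiZ_hs:
  assumes "norm w < 1"
  shows "((\<lambda>n::int. w ^ nat (tri n)) has_sum (2 * ram_psi w)) UNIV"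
proof -
  have 1: "((\<lambda>n. w ^ (n * (n + 1) div 2)) has_sum ram_psi w) UNIV"
    unfolding ram_psi_def by (rule nat_hs[OF assms]) (rule tri_ge)
  have e1: "(\<lambda>n. w ^ nat (tri (int n))) = (\<lambda>n. w ^ (n * (n + 1) div 2))"
    by (rule ext) (simp only: tri_pos nat_int)
  have e2: "(\<lambda>n. w ^ nat (tri (- int n - 1))) = (\<lambda>n. w ^ (n * (n + 1) div 2))"
    by (rule ext) (simp only: tri_neg nat_int)
  have "((\<lambda>n::int. w ^ nat (tri n)) has_sum (ram_psi w + ram_psi w)) UNIV"
    by (rule int_split) (simp_all only: e1 e2 1)
  then show ?thesis by (simp only: mult_2)
qed

lemma key1:
  fixes p0 p1 p2 :: int
  assumes "b = 2*c+1"
  shows "3*(4*p0)^2 + 5*(2*p1+1)^2 + 4*int b*(2*p2+1)^2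
     = 8 * int (c + 6*nat(p0^2) + 5*nat(tri p1) + 4*b*nat(tri p2)) + 9"
proof -
  have "int (c + 6*nat(p0^2) + 5*nat(tri p1) + 4*b*nat(tri p2))
      = int c + 6*p0^2 + 5*tri p1 + 4*int b*tri p2"
    using tri_nonneg[of p1] tri_nonneg[of p2] by simp
  moreover have "int b = 2 * int c + 1" using assms by simp
  ultimately show ?thesis using tri2[of p1] tri2[of p2] by algebra
qed

lemma key2:
  fixes p3 p1 p4 :: int
  shows "3*(4*p3+2)^2 + 5*(2*p1+1)^2 + 4*int b*(2*p4)^2
     = 8 * int (1 + 12*nat(tri p3) + 5*nat(tri p1) + 2*b*nat(p4^2)) + 9"
proof -
  have "int (1 + 12*nat(tri p3) + 5*nat(tri p1) + 2*b*nat(p4^2))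
      = 1 + 12*tri p3 + 5*tri p1 + 2*int b*p4^2"
    using tri_nonneg[of p1] tri_nonneg[of p3] by simp
  then show ?thesis using tri2[of p1] tri2[of p3] by algebra
qed

lemma contra1: "(4::int) * X = 8 * N + 6 \<Longrightarrow> False" by presburger

lemma classify:
  fixes x y z :: int
  assumes b: "odd b" and eq: "3*x^2 + 5*y^2 + 4*int b*z^2 = 8*int n + 9"
  shows "(\<exists>u ys t. (x,y,z) = (4*u, 2*ys+1, 2*t+1)) \<or> (\<exists>g ys w. (x,y,z) = (4*g+2, 2*ys+1, 2*w))"
proof -
  have par: "odd (3*x^2 + 5*y^2 + 4*int b*z^2)" using eq by simp
  have yo: "odd y"
  proof
    assume "even y"
    then obtain y' where y': "y = 2*y'" by (rule evenE)
    show False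
    proof (cases "even x")
      case True then show False using par \<open>even y\<close> by simp
    next
      case False
      then obtain a where a: "x = 2*a+1" by (rule oddE)
      have "4*(3*a^2+3*a+5*y'^2+int b*z^2) = 8*int n + 6"
        using eq unfolding a y' by algebra
      then show False by (rule contra1)
    qed
  qed
  then obtain ys where ys: "y = 2*ys+1" by (rule oddE)
  have xe: "even x" using par yo by simp
  then obtain a where a: "x = 2*a" by (rule evenE)
  have "4*(3*a^2 + 5*(2*tri ys) + int b*z^2) = 4*(2*int n+1)"
    using eq tri2[of ys] unfolding a ys by algebra
  then have "3*a^2 + 5*(2*tri ys) + int b*z^2 = 2*int n+1" by simp
  then have "odd (3*a^2 + 5*(2*tri ys) + int b*z^2)" by simp
  then have az: "even a \<longleftrightarrow> odd z" using b by simp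
  show ?thesis
  proof (cases "even a")
    case True
    then obtain u where u: "a = 2*u" by (rule evenE)
    from True az obtain t where t: "z = 2*t+1" by (meson oddE)
    have "(x,y,z) = (4*u, 2*ys+1, 2*t+1)" using a u ys t by simp
    then show ?thesis by blast
  next
    case False
    then obtain g where g: "a = 2*g+1" by (rule oddE)
    from False az obtain w where w: "z = 2*w" by (meson evenE)
    have "(x,y,z) = (4*g+2, 2*ys+1, 2*w)" using a g ys w by simp
    then show ?thesis by blast
  qed
qed


lemma sq_bound:
  fixes x M :: int
  assumes "x^2 \<le> M"
  shows "-M \<le> x \<and> x \<le> M"
proof -
  have "\<bar>x\<bar> \<le> x^2"
  proof (cases "x = 0")
    case False
    then have "\<bar>x\<bar> * 1 \<le> \<bar>x\<bar> * \<bar>x\<bar>" by (intro mult_left_mono) auto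
    then show ?thesis by (simp add: power2_eq_square)
  qed simp
  with assms show ?thesis by linarith
qed

lemma nq: "norm (q::complex) < 1 \<Longrightarrow> k > 0 \<Longrightarrow> norm (q ^ k) < 1"
  by (simp add: norm_power power_less_one_iff)

theorem lemma6p4:
  fixes b :: nat and q :: complex
  assumes "b > 0" and "odd b" and "norm q < 1"
  shows "(\<Sum>n. of_nat (N3 3 5 (4 * b) (8 * n + 9)) * q ^ n) =
    4 * q ^ ((b - 1) div 2) * ram_phi (q ^ 6) * ram_psi (q ^ 5) * ram_psi (q ^ (4 * b))
    + 4 * q * ram_phi (q ^ (2 * b)) * ram_psi (q ^ 5) * ram_psi (q ^ 12)"
proof -
  obtain c where bc: "b = 2*c+1" using assms(2) by (rule oddE)
  have cdef: "(b - 1) div 2 = c" using bc by simp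
  define h where "h = (\<lambda>(x::int,y::int,z::int). 3*x^2 + 5*y^2 + 4*int b*z^2)"
  define F where "F = (\<lambda>t. q ^ nat ((h t - 9) div 8))"
  define S where "S = (\<lambda>n::nat. {t. h t = 8*int n + 9})"
  define T where "T = {t. \<exists>n::nat. h t = 8*int n + 9}"
  define j1 where "j1 = (\<lambda>((a1::int,a2::int),a3::int). (4 * a1, 2 * a2 + 1, 2 * a3 + 1))"
  define j2 where "j2 = (\<lambda>((a1::int,a2::int),a3::int). (4 * a1 + 2, 2 * a2 + 1, 2 * a3))"
  define R1 where "R1 = q^c * (ram_phi (q^6) * (2 * ram_psi (q^5)) * (2 * ram_psi (q^(4*b))))"
  define R2 where "R2 = q * ((2 * ram_psi (q^12)) * (2 * ram_psi (q^5)) * ram_phi (q^(2*b)))"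
  have Fval: "F t = q ^ n" if "h t = 8 * int n + 9" for t n
    using that unfolding F_def by simp

  have H1: "(F has_sum R1) (j1 ` UNIV)"
  proof -
    have A: "((\<lambda>u::int. (q^6) ^ nat (u^2)) has_sum ram_phi (q^6)) UNIV"
      by (rule phi_hs) (rule nq[OF assms(3)], simp)
    have B: "((\<lambda>u::int. (q^5) ^ nat (tri u)) has_sum (2 * ram_psi (q^5))) UNIV"
      by (rule psiZ_hs) (rule nq[OF assms(3)], simp)
    have C: "((\<lambda>u::int. (q^(4*b)) ^ nat (tri u)) has_sum (2 * ram_psi (q^(4*b)))) UNIV"
      by (rule psiZ_hs) (rule nq[OF assms(3)], use assms(1) in simp)
    have P: "((\<lambda>p. q^c * (\<lambda>(x,y). (\<lambda>(x,y). (q^6) ^ nat (x^2) * (q^5) ^ nat (tri y)) x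
                 * (q^(4*b)) ^ nat (tri y)) p) has_sum R1) UNIV"
      unfolding R1_def using has_sum_cmult_right[OF has_sum_prod2[OF has_sum_prod2[OF A B] C], of "q^c"]
      by simp
    have inj: "inj_on j1 UNIV" unfolding j1_def inj_on_def by auto
    have eq: "F (j1 p) = q^c * (\<lambda>(x,y). (\<lambda>(x,y). (q^6) ^ nat (x^2) * (q^5) ^ nat (tri y)) x
                 * (q^(4*b)) ^ nat (tri y)) p" for p
    proof -
      obtain a1 a2 a3 where p: "p = ((a1,a2),a3)" by (metis prod.exhaust)
      let ?N = "c + 6*nat(a1^2) + 5*nat(tri a2) + 4*b*nat(tri a3)"
      have "h (j1 p) = 8 * int ?N + 9"
        unfolding p j1_def h_def using key1[OF bc] by simp
      then have "F (j1 p) = q ^ ?N" by (rule Fval)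
      also have "\<dots> = q^c * ((q^6) ^ nat (a1^2) * (q^5) ^ nat (tri a2) * (q^(4*b)) ^ nat (tri a3))"
        by (simp add: power_add power_mult)
      finally show ?thesis unfolding p by simp
    qed
    show ?thesis
      unfolding has_sum_reindex[OF inj] comp_def eq using P by simp
  qed

  have H2: "(F has_sum R2) (j2 ` UNIV)"
  proof -
    have A: "((\<lambda>u::int. (q^(2*b)) ^ nat (u^2)) has_sum ram_phi (q^(2*b))) UNIV"
      by (rule phi_hs) (rule nq[OF assms(3)], use assms(1) in simp)
    have B: "((\<lambda>u::int. (q^5) ^ nat (tri u)) has_sum (2 * ram_psi (q^5))) UNIV"
      by (rule psiZ_hs) (rule nq[OF assms(3)], simp)
    have C: "((\<lambda>u::int. (q^12) ^ nat (tri u)) has_sum (2 * ram_psi (q^12))) UNIV"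
      by (rule psiZ_hs) (rule nq[OF assms(3)], simp)
    have P: "((\<lambda>p. q * (\<lambda>(x,y). (\<lambda>(x,y). (q^12) ^ nat (tri x) * (q^5) ^ nat (tri y)) x
                 * (q^(2*b)) ^ nat (y^2)) p) has_sum R2) UNIV"
      unfolding R2_def using has_sum_cmult_right[OF has_sum_prod2[OF has_sum_prod2[OF C B] A], of "q"]
      by simp
    have inj: "inj_on j2 UNIV" unfolding j2_def inj_on_def by auto
    have eq: "F (j2 p) = q * (\<lambda>(x,y). (\<lambda>(x,y). (q^12) ^ nat (tri x) * (q^5) ^ nat (tri y)) x
                 * (q^(2*b)) ^ nat (y^2)) p" for p
    proof -
      obtain a1 a2 a3 where p: "p = ((a1,a2),a3)" by (metis prod.exhaust)
      let ?N = "1 + 12*nat(tri a1) + 5*nat(tri a2) + 2*b*nat(a3^2)"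
      have "h (j2 p) = 8 * int ?N + 9"
        unfolding p j2_def h_def using key2 by simp
      then have "F (j2 p) = q ^ ?N" by (rule Fval)
      also have "\<dots> = q * ((q^12) ^ nat (tri a1) * (q^5) ^ nat (tri a2) * (q^(2*b)) ^ nat (a3^2))"
        by (simp add: power_add power_mult)
      finally show ?thesis unfolding p by simp
    qed
    show ?thesis
      unfolding has_sum_reindex[OF inj] comp_def eq using P by simp
  qed

  have TU: "T = j1 ` UNIV \<union> j2 ` UNIV"
  proof (intro equalityI subsetI)
    fix t assume "t \<in> T"
    then obtain n where n: "h t = 8 * int n + 9" unfolding T_def by blast
    obtain x y z where t: "t = (x,y,z)" by (metis prod.exhaust)
    have "3*x^2 + 5*y^2 + 4*int b*z^2 = 8*int n + 9" using n unfolding t h_def by simp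
    from classify[OF assms(2) this]
    show "t \<in> j1 ` UNIV \<union> j2 ` UNIV"
    proof
      assume "\<exists>u ys zt. (x, y, z) = (4 * u, 2 * ys + 1, 2 * zt + 1)"
      then obtain u ys zt where "(x, y, z) = (4 * u, 2 * ys + 1, 2 * zt + 1)" by blast
      then have "t = j1 ((u,ys),zt)" unfolding t j1_def by simp
      then show ?thesis by blast
    next
      assume "\<exists>u ys zt. (x, y, z) = (4 * u + 2, 2 * ys + 1, 2 * zt)"
      then obtain u ys zt where "(x, y, z) = (4 * u + 2, 2 * ys + 1, 2 * zt)" by blast
      then have "t = j2 ((u,ys),zt)" unfolding t j2_def by simp
      then show ?thesis by blast
    qed
  next
    fix t assume "t \<in> j1 ` UNIV \<union> j2 ` UNIV"
    then show "t \<in> T"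
    proof
      assume "t \<in> j1 ` UNIV"
      then obtain a1 a2 a3 where t: "t = j1 ((a1,a2),a3)" by auto
      have "h t = 8 * int (c + 6*nat(a1^2) + 5*nat(tri a2) + 4*b*nat(tri a3)) + 9"
        unfolding t j1_def h_def using key1[OF bc] by simp
      then show ?thesis unfolding T_def by blast
    next
      assume "t \<in> j2 ` UNIV"
      then obtain a1 a2 a3 where t: "t = j2 ((a1,a2),a3)" by auto
      have "h t = 8 * int (1 + 12*nat(tri a1) + 5*nat(tri a2) + 2*b*nat(a3^2)) + 9"
        unfolding t j2_def h_def using key2 by simp
      then show ?thesis unfolding T_def by blast
    qed
  qed
  have disj: "j1 ` UNIV \<inter> j2 ` UNIV = {}"
  proof -
    have "j1 p \<noteq> j2 p'" for p p'
    proof -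
      obtain a1 a2 a3 where p: "p = ((a1,a2),a3)" by (metis prod.exhaust)
      obtain b1 b2 b3 where p': "p' = ((b1,b2),b3)" by (metis prod.exhaust)
      have "4 * a1 \<noteq> 4 * b1 + (2::int)" by presburger
      then show ?thesis unfolding p p' j1_def j2_def by simp
    qed
    then show ?thesis by blast
  qed
  have HT: "(F has_sum (R1 + R2)) T"
    unfolding TU by (rule has_sum_Un_disjoint[OF H1 H2 disj])

  define f' where "f' = (\<lambda>(n::nat, t::int\<times>int\<times>int). q ^ n)"
  have HS: "(f' has_sum (R1 + R2)) (Sigma UNIV S)"
  proof -
    have "(f' has_sum (R1 + R2)) (Sigma UNIV S) = (F has_sum (R1 + R2)) T"
      by (rule has_sum_reindex_bij_witness[where i="\<lambda>t. (nat ((h t - 9) div 8), t)" and j=snd])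
         (auto simp: S_def T_def F_def f'_def)
    then show ?thesis using HT by simp
  qed
  have finS: "finite (S n)" for n
  proof -
    let ?M = "8 * int n + 9"
    have "S n \<subseteq> {-?M..?M} \<times> {-?M..?M} \<times> {-?M..?M}"
    proof
      fix t assume "t \<in> S n"
      then obtain x y z where t: "t = (x,y,z)" and e: "3*x^2 + 5*y^2 + 4*int b*z^2 = ?M"
        unfolding S_def h_def by (cases t) auto
      have "0 \<le> x^2" "0 \<le> y^2" by simp_all
      have "1 * z^2 \<le> int b * z^2" using assms(1) by (intro mult_right_mono) auto
      have "4 * int b * z^2 = 4 * (int b * z^2)" by simp
      have "0 \<le> z^2" by simp
      note facts = this e \<open>0 \<le> x^2\<close> \<open>4 * int b * z^2 = 4 * (int b * z^2)\<close> \<open>0 \<le> y^2\<close> \<open>1 * z^2 \<le> int b * z^2\<close>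
      have "x^2 \<le> ?M" using facts by linarith
      moreover have "y^2 \<le> ?M" using facts by linarith
      moreover have "z^2 \<le> ?M" using facts by linarith
      ultimately have "-?M \<le> x \<and> x \<le> ?M" "-?M \<le> y \<and> y \<le> ?M" "-?M \<le> z \<and> z \<le> ?M"
        using sq_bound by blast+
      then show "t \<in> {-?M..?M} \<times> {-?M..?M} \<times> {-?M..?M}"
        unfolding t by simp
    qed
    then show ?thesis by (rule finite_subset) auto
  qed
  have card_eq: "N3 3 5 (4 * b) (8 * n + 9) = card (S n)" for n
    unfolding N3_def S_def h_def
  proof (intro arg_cong[where f=card] set_eqI)
    fix t :: "int \<times> int \<times> int"
    obtain x y z where t: "t = (x,y,z)" by (metis prod.exhaust)
    have "(int (8 * n + 9) = int 3 * x^2 + int 5 * y^2 + int (4 * b) * z^2) \<longleftrightarrow>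
          (3 * x^2 + 5 * y^2 + 4 * int b * z^2 = 8 * int n + 9)" by linarith
    then show "t \<in> {(x, y, z). int (8 * n + 9) = int 3 * x^2 + int 5 * y^2 + int (4 * b) * z^2} \<longleftrightarrow>
       t \<in> {t. (case t of (x, y, z) \<Rightarrow> 3 * x^2 + 5 * y^2 + 4 * int b * z^2) = 8 * int n + 9}"
      unfolding t by simp
  qed
  have "((\<lambda>n. of_nat (card (S n)) * q ^ n) has_sum (R1 + R2)) UNIV"
  proof (rule has_sum_SigmaD[OF HS])
    fix n :: nat
    have "((\<lambda>t. f' (n, t)) has_sum (\<Sum>t\<in>S n. f' (n, t))) (S n)"
      by (rule has_sum_finite[OF finS])
    then show "((\<lambda>t. f' (n, t)) has_sum of_nat (card (S n)) * q ^ n) (S n)"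
      by (simp add: f'_def)
  qed
  then have "(\<lambda>n. of_nat (N3 3 5 (4 * b) (8 * n + 9)) * q ^ n) sums (R1 + R2)"
    unfolding card_eq by (rule has_sum_imp_sums)
  then have "(\<Sum>n. of_nat (N3 3 5 (4 * b) (8 * n + 9)) * q ^ n) = R1 + R2"
    by (rule sums_unique[symmetric])
  also have "\<dots> = 4 * q ^ ((b - 1) div 2) * ram_phi (q ^ 6) * ram_psi (q ^ 5) * ram_psi (q ^ (4 * b))
    + 4 * q * ram_phi (q ^ (2 * b)) * ram_psi (q ^ 5) * ram_psi (q ^ 12)"
    unfolding R1_def R2_def cdef by (simp add: algebra_simps)
  finally show ?thesis .
qed

end
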